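(* Let $\mathcal{X}$ be a finite set, $\pi$ a probability mass function on $\mathcal{X}$ with full support, and $P$ an ergodic $\pi$-reversible transition matrix. Let a group $\mathcal{G}$ act on $\mathcal{X}$ and let $G$ and $M$ be the Gibbs and Metropolis–Hastings orbit kernels for this same action, and $\theta:=\|M-G\|_{\ell^2_0(\pi)\to\ell^2_0(\pi)}$. Then for every positive integer $k$, $0\le\rho(M^kPM^k)-\rho(GPG)\le\rho(P)(2\theta^k+\theta^{2k})$. In particular, if $\theta<1$, then $\lim_{k\to\infty}\big(\rho(M^kPM^k)-\rho(GPG)\big)=0$.
   Context: $\langle f,g\rangle_\pi=\sum_x f(x)g(x)\pi(x)$, $\ell^2_0(\pi)=\{f:\sum_xf(x)\pi(x)=0\}$, operator norms with respect to $\|\cdot\|_\pi$. With $\mathcal{O}(x)$ the orbit of $x$: $G(x,y)=\pi(y)/\pi(\mathcal{O}(x))$ for $y\in\mathcal{O}(x)$, else $0$; $M(x,y)=\frac{1}{|\mathcal{O}(x)|-1}\min\{1,\pi(y)/\pi(x)\}$ for $y\in\mathcal{O}(x)\setminus\{x\}$, $0$ off the orbit, $M(x,x)=1-\sum_{y\ne x}M(x,y)$. For a $\pi$-self-adjoint kernel $K$, $\rho(K)=\sup_{0\ne f\in\ell^2_0(\pi)}|\langle f,Kf\rangle_\pi|/\langle f,f\rangle_\pi$. *)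

theory Defs
  imports "HOL-Analysis.Analysis" "HOL-Algebra.Group_Action"
begin

definition kapply :: "('x::finite \<Rightarrow> 'x \<Rightarrow> real) \<Rightarrow> ('x \<Rightarrow> real) \<Rightarrow> 'x \<Rightarrow> real" where
  "kapply K f = (\<lambda>x. \<Sum>y\<in>UNIV. K x y * f y)"

definition kmult :: "('x::finite \<Rightarrow> 'x \<Rightarrow> real) \<Rightarrow> ('x \<Rightarrow> 'x \<Rightarrow> real) \<Rightarrow> 'x \<Rightarrow> 'x \<Rightarrow> real" where
  "kmult K L = (\<lambda>x z. \<Sum>y\<in>UNIV. K x y * L y z)"

definition kid :: "'x \<Rightarrow> 'x \<Rightarrow> real" where
  "kid = (\<lambda>x y. if x = y then 1 else 0)"

primrec kpow :: "('x::finite \<Rightarrow> 'x \<Rightarrow> real) \<Rightarrow> nat \<Rightarrow> 'x \<Rightarrow> 'x \<Rightarrow> real" where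
  "kpow K 0 = kid"
| "kpow K (Suc n) = kmult K (kpow K n)"

definition pmf_full_support :: "('x::finite \<Rightarrow> real) \<Rightarrow> bool" where
  "pmf_full_support \<pi> \<longleftrightarrow> (\<forall>x. \<pi> x > 0) \<and> (\<Sum>x\<in>UNIV. \<pi> x) = 1"

definition stochastic :: "('x::finite \<Rightarrow> 'x \<Rightarrow> real) \<Rightarrow> bool" where
  "stochastic P \<longleftrightarrow> (\<forall>x y. P x y \<ge> 0) \<and> (\<forall>x. (\<Sum>y\<in>UNIV. P x y) = 1)"

definition reversible :: "('x \<Rightarrow> real) \<Rightarrow> ('x \<Rightarrow> 'x \<Rightarrow> real) \<Rightarrow> bool" where
  "reversible \<pi> P \<longleftrightarrow> (\<forall>x y. \<pi> x * P x y = \<pi> y * P y x)"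

definition irreducible_kernel :: "('x::finite \<Rightarrow> 'x \<Rightarrow> real) \<Rightarrow> bool" where
  "irreducible_kernel P \<longleftrightarrow> (\<forall>x y. \<exists>n. kpow P n x y > 0)"

definition aperiodic_kernel :: "('x::finite \<Rightarrow> 'x \<Rightarrow> real) \<Rightarrow> bool" where
  "aperiodic_kernel P \<longleftrightarrow> (\<forall>x. Gcd {n. n > 0 \<and> kpow P n x x > 0} = (1::nat))"

definition ergodic :: "('x::finite \<Rightarrow> 'x \<Rightarrow> real) \<Rightarrow> bool" where
  "ergodic P \<longleftrightarrow> irreducible_kernel P \<and> aperiodic_kernel P"

definition inner_pi :: "('x::finite \<Rightarrow> real) \<Rightarrow> ('x \<Rightarrow> real) \<Rightarrow> ('x \<Rightarrow> real) \<Rightarrow> real" where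
  "inner_pi \<pi> f g = (\<Sum>x\<in>UNIV. f x * g x * \<pi> x)"

definition l2_0 :: "('x::finite \<Rightarrow> real) \<Rightarrow> ('x \<Rightarrow> real) set" where
  "l2_0 \<pi> = {f. (\<Sum>x\<in>UNIV. f x * \<pi> x) = 0}"

text \<open>Operator norm on l^2_0(pi) w.r.t. the pi-norm (0 if l^2_0 is trivial; all
quotients are nonnegative, so inserting 0 does not change the supremum otherwise).\<close>
definition opnorm_l2_0 :: "('x::finite \<Rightarrow> real) \<Rightarrow> ('x \<Rightarrow> 'x \<Rightarrow> real) \<Rightarrow> real" where
  "opnorm_l2_0 \<pi> K = Sup (insert 0 {sqrt (inner_pi \<pi> (kapply K f) (kapply K f)) / sqrt (inner_pi \<pi> f f)
       | f. f \<in> l2_0 \<pi> \<and> f \<noteq> (\<lambda>_. 0)})"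

definition rho :: "('x::finite \<Rightarrow> real) \<Rightarrow> ('x \<Rightarrow> 'x \<Rightarrow> real) \<Rightarrow> real" where
  "rho \<pi> K = Sup (insert 0 {\<bar>inner_pi \<pi> f (kapply K f)\<bar> / inner_pi \<pi> f f
       | f. f \<in> l2_0 \<pi> \<and> f \<noteq> (\<lambda>_. 0)})"

definition gibbs_orbit :: "_ \<Rightarrow> ('g \<Rightarrow> 'x::finite \<Rightarrow> 'x) \<Rightarrow> ('x \<Rightarrow> real) \<Rightarrow> 'x \<Rightarrow> 'x \<Rightarrow> real" where
  "gibbs_orbit \<Gamma> \<phi> \<pi> = (\<lambda>x y. if y \<in> orbit \<Gamma> \<phi> x
       then \<pi> y / (\<Sum>z\<in>orbit \<Gamma> \<phi> x. \<pi> z) else 0)"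

definition mh_offdiag :: "_ \<Rightarrow> ('g \<Rightarrow> 'x::finite \<Rightarrow> 'x) \<Rightarrow> ('x \<Rightarrow> real) \<Rightarrow> 'x \<Rightarrow> 'x \<Rightarrow> real" where
  "mh_offdiag \<Gamma> \<phi> \<pi> = (\<lambda>x y. if y \<in> orbit \<Gamma> \<phi> x \<and> y \<noteq> x
       then min 1 (\<pi> y / \<pi> x) / (real (card (orbit \<Gamma> \<phi> x)) - 1) else 0)"

definition mh_orbit :: "_ \<Rightarrow> ('g \<Rightarrow> 'x::finite \<Rightarrow> 'x) \<Rightarrow> ('x \<Rightarrow> real) \<Rightarrow> 'x \<Rightarrow> 'x \<Rightarrow> real" where
  "mh_orbit \<Gamma> \<phi> \<pi> = (\<lambda>x y. if y = x
       then 1 - (\<Sum>z\<in>UNIV - {x}. mh_offdiag \<Gamma> \<phi> \<pi> x z)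
       else mh_offdiag \<Gamma> \<phi> \<pi> x y)"

end

theory Submission
  imports Defs
begin


lemma kapply_kmult: "kapply (kmult K L) f = kapply K (kapply L f)"
  unfolding kapply_def kmult_def
  by (auto simp: sum_distrib_left sum_distrib_right mult.assoc intro!: ext sum.swap[THEN trans] sum.cong)

lemma kapply_kid: "kapply kid f = f"
proof
  fix x
  have "kapply kid f x = (\<Sum>y\<in>UNIV. if x = y then f y else 0)"
    unfolding kapply_def kid_def by (rule sum.cong) auto
  also have "\<dots> = f x" by (simp add: sum.delta)
  finally show "kapply kid f x = f x" .
qed

lemma kapply_kpow: "kapply (kpow K n) f = (kapply K ^^ n) f"
  by (induction n arbitrary: f) (auto simp: kapply_kmult kapply_kid)

lemma kapply_add: "kapply K (\<lambda>x. f x + g x) = (\<lambda>x. kapply K f x + kapply K g x)"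
  unfolding kapply_def by (auto simp: distrib_left sum.distrib)

lemma kapply_diff: "kapply K (\<lambda>x. f x - g x) = (\<lambda>x. kapply K f x - kapply K g x)"
  unfolding kapply_def by (auto simp: right_diff_distrib sum_subtractf)

lemma kapply_scale: "kapply K (\<lambda>x. c * f x) = (\<lambda>x. c * kapply K f x)"
  unfolding kapply_def by (auto simp: sum_distrib_left intro!: ext sum.cong)

lemma kapply_zero: "kapply K (\<lambda>x. 0) = (\<lambda>x. 0)"
  unfolding kapply_def by auto

lemma inner_comm: "inner_pi p f g = inner_pi p g f"
  unfolding inner_pi_def by (simp add: mult.commute mult.left_commute)

lemma inner_add_left: "inner_pi p (\<lambda>x. f x + g x) h = inner_pi p f h + inner_pi p g h"
  unfolding inner_pi_def by (simp add: algebra_simps sum.distrib)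
lemma inner_add_right: "inner_pi p h (\<lambda>x. f x + g x) = inner_pi p h f + inner_pi p h g"
  unfolding inner_pi_def by (simp add: algebra_simps sum.distrib)
lemma inner_diff_left: "inner_pi p (\<lambda>x. f x - g x) h = inner_pi p f h - inner_pi p g h"
  unfolding inner_pi_def by (simp add: algebra_simps sum_subtractf)
lemma inner_diff_right: "inner_pi p h (\<lambda>x. f x - g x) = inner_pi p h f - inner_pi p h g"
  unfolding inner_pi_def by (simp add: algebra_simps sum_subtractf)
lemma inner_scale_left: "inner_pi p (\<lambda>x. c * f x) h = c * inner_pi p f h"
  unfolding inner_pi_def by (simp add: algebra_simps sum_distrib_left)
lemma inner_scale_right: "inner_pi p h (\<lambda>x. c * f x) = c * inner_pi p h f"
  unfolding inner_pi_def by (simp add: algebra_simps sum_distrib_left)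
lemma inner_zero_right: "inner_pi p h (\<lambda>x. 0) = 0"
  unfolding inner_pi_def by simp

lemma selfadj:
  assumes "reversible p K"
  shows "inner_pi p f (kapply K g) = inner_pi p (kapply K f) g"
proof -
  have "inner_pi p f (kapply K g) = (\<Sum>x\<in>UNIV. \<Sum>y\<in>UNIV. f x * g y * (p x * K x y))"
    unfolding inner_pi_def kapply_def
    by (auto simp: sum_distrib_left sum_distrib_right algebra_simps intro!: sum.cong)
  also have "\<dots> = (\<Sum>x\<in>UNIV. \<Sum>y\<in>UNIV. f x * g y * (p y * K y x))"
    using assms unfolding reversible_def by simp
  also have "\<dots> = (\<Sum>y\<in>UNIV. \<Sum>x\<in>UNIV. f x * g y * (p y * K y x))"
    by (rule sum.swap)
  also have "\<dots> = inner_pi p (kapply K f) g"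
    unfolding inner_pi_def kapply_def
    by (auto simp: sum_distrib_left sum_distrib_right algebra_simps intro!: sum.cong)
  finally show ?thesis .
qed

lemma kapply_const:
  assumes "\<And>x. (\<Sum>y\<in>UNIV. K x y) = 1"
  shows "kapply K (\<lambda>_. c) = (\<lambda>_. c)"
  unfolding kapply_def using assms by (auto simp: sum_distrib_right[symmetric])

lemma l2_0_inner: "f \<in> l2_0 p \<longleftrightarrow> inner_pi p (\<lambda>_. 1) f = 0"
  unfolding l2_0_def inner_pi_def by simp

lemma l2_0_pres:
  assumes "reversible p K" "\<And>x. (\<Sum>y\<in>UNIV. K x y) = 1" "f \<in> l2_0 p"
  shows "kapply K f \<in> l2_0 p"
  using assms by (simp add: l2_0_inner selfadj kapply_const)

lemma l2_0_add: "f \<in> l2_0 p \<Longrightarrow> g \<in> l2_0 p \<Longrightarrow> (\<lambda>x. f x + g x) \<in> l2_0 p"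
  by (simp add: l2_0_inner inner_add_right)
lemma l2_0_diff: "f \<in> l2_0 p \<Longrightarrow> g \<in> l2_0 p \<Longrightarrow> (\<lambda>x. f x - g x) \<in> l2_0 p"
  by (simp add: l2_0_inner inner_diff_right)
lemma l2_0_scale: "f \<in> l2_0 p \<Longrightarrow> (\<lambda>x. c * f x) \<in> l2_0 p"
  by (simp add: l2_0_inner inner_scale_right)


lemma kapply_ksub: "kapply (\<lambda>x y. K x y - L x y) f = (\<lambda>x. kapply K f x - kapply L f x)"
  unfolding kapply_def by (auto simp: left_diff_distrib sum_subtractf)

lemma inner_self_nonneg: "(\<And>x. p x \<ge> 0) \<Longrightarrow> inner_pi p f f \<ge> 0"
  unfolding inner_pi_def by (auto intro!: sum_nonneg)

lemma sq_p_nonneg: "(\<And>x. (p::'x\<Rightarrow>real) x > 0) \<Longrightarrow> 0 \<le> (f::'x\<Rightarrow>real) x * f x * p x"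
  by (rule mult_nonneg_nonneg) (simp_all add: less_imp_le)

lemma inner_self_pos:
  assumes "\<And>x. p x > 0" "f \<noteq> (\<lambda>_. 0)"
  shows "inner_pi (p::'x::finite\<Rightarrow>real) f f > 0"
proof -
  obtain z where z: "f z \<noteq> 0" using assms(2) by auto
  have "0 < f z * f z * p z" using z assms(1)[of z] by (metis mult_pos_pos not_real_square_gt_zero)
  also have "\<dots> \<le> inner_pi p f f" unfolding inner_pi_def
    by (intro member_le_sum) (auto intro: sq_p_nonneg[of p, OF assms(1)])
  finally show ?thesis .
qed

lemma inner_ext:
  assumes "\<And>x. p x > 0" "\<And>h. inner_pi (p::'x::finite\<Rightarrow>real) h u = inner_pi p h v"
  shows "u = v"
proof (rule ccontr)
  assume "u \<noteq> v"
  then have "(\<lambda>x. u x - v x) \<noteq> (\<lambda>_. 0)" by (auto simp: fun_eq_iff)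
  then have "inner_pi p (\<lambda>x. u x - v x) (\<lambda>x. u x - v x) > 0" using inner_self_pos assms(1) by blast
  moreover have "inner_pi p (\<lambda>x. u x - v x) (\<lambda>x. u x - v x) = 0"
    using assms(2)[of "\<lambda>x. u x - v x"] by (simp add: inner_diff_right)
  ultimately show False by simp
qed

lemma inner_self_zero:
  assumes "\<And>x. p x > 0" "inner_pi (p::'x::finite\<Rightarrow>real) f f \<le> 0"
  shows "f = (\<lambda>_. 0)"
  using inner_self_pos[of p f] assms by force

lemma point_bound:
  assumes "\<And>x. p x > 0"
  shows "\<bar>f y\<bar> \<le> sqrt (inner_pi (p::'x::finite\<Rightarrow>real) f f / Min (range p))"
proof -
  have m: "Min (range p) > 0" using assms by simp
  have m2: "Min (range p) \<le> p y" by simp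
  have "f y * f y * p y \<le> inner_pi p f f" unfolding inner_pi_def
    by (intro member_le_sum) (auto intro: sq_p_nonneg[of p, OF assms(1)])
  moreover have "f y * f y * Min (range p) \<le> f y * f y * p y"
    using m2 by (intro mult_left_mono) auto
  ultimately have "f y * f y * Min (range p) \<le> inner_pi p f f" by linarith
  then have "f y * f y \<le> inner_pi p f f / Min (range p)"
    by (simp only: pos_le_divide_eq[OF m])
  then have "\<bar>f y\<bar>\<^sup>2 \<le> inner_pi p f f / Min (range p)" by (simp add: power2_eq_square)
  then show ?thesis by (rule real_le_rsqrt)
qed

lemma kapply_bound:
  assumes "\<And>y. \<bar>f y\<bar> \<le> s"
  shows "\<bar>kapply K f x\<bar> \<le> (\<Sum>y\<in>UNIV. \<bar>K x y\<bar>) * s"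
proof -
  have "\<bar>kapply K f x\<bar> \<le> (\<Sum>y\<in>UNIV. \<bar>K x y * f y\<bar>)" unfolding kapply_def by (rule sum_abs)
  also have "\<dots> \<le> (\<Sum>y\<in>UNIV. \<bar>K x y\<bar> * s)"
    by (intro sum_mono) (auto simp: abs_mult intro: mult_left_mono assms)
  finally show ?thesis by (simp add: sum_distrib_right)
qed

locale pmf_setting =
  fixes p :: "'x::finite \<Rightarrow> real"
  assumes pos: "\<And>x. p x > 0" and sum1: "(\<Sum>x\<in>UNIV. p x) = 1"
begin

lemma p_le1: "p x \<le> 1"
proof -
  have "p x \<le> (\<Sum>x\<in>UNIV. p x)" by (rule member_le_sum) (auto intro: less_imp_le pos)
  then show ?thesis using sum1 by simp
qed

definition sc where "sc f = sqrt (inner_pi p f f / Min (range p))"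

lemma sc_nonneg: "sc f \<ge> 0"
  unfolding sc_def using pos inner_self_nonneg[of p f] by (simp add: less_imp_le)

lemma sc_sq: "(sc f)\<^sup>2 = inner_pi p f f / Min (range p)"
  unfolding sc_def using pos inner_self_nonneg[of p f] by (simp add: less_imp_le)

lemma bdd_rho: "bdd_above {\<bar>inner_pi p f (kapply K f)\<bar> / inner_pi p f f | f. f \<in> l2_0 p \<and> f \<noteq> (\<lambda>_. 0)}"
  (is "bdd_above {?e f | f. _}" is "bdd_above ?S")
proof -
  define C where "C = (\<Sum>x\<in>UNIV. \<Sum>y\<in>UNIV. \<bar>K x y\<bar>) / Min (range p)"
  have "\<bar>inner_pi p f (kapply K f)\<bar> / inner_pi p f f \<le> C" if "f \<noteq> (\<lambda>_. 0)" for f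
  proof -
    have ipos: "inner_pi p f f > 0" using inner_self_pos pos that by blast
    have "\<bar>inner_pi p f (kapply K f)\<bar> \<le> (\<Sum>x\<in>UNIV. \<bar>f x * kapply K f x * p x\<bar>)"
      unfolding inner_pi_def by (rule sum_abs)
    also have "\<dots> \<le> (\<Sum>x\<in>UNIV. (sc f)\<^sup>2 * (\<Sum>y\<in>UNIV. \<bar>K x y\<bar>))"
    proof (intro sum_mono)
      fix x
      have a: "\<bar>f x\<bar> \<le> sc f" using point_bound pos unfolding sc_def by blast
      have b: "\<bar>kapply K f x\<bar> \<le> (\<Sum>y\<in>UNIV. \<bar>K x y\<bar>) * sc f"
        by (rule kapply_bound) (use point_bound pos in \<open>auto simp: sc_def\<close>)
      have c: "\<bar>p x\<bar> \<le> 1" using p_le1 pos[of x] by simp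
      have "\<bar>f x * kapply K f x * p x\<bar> = \<bar>f x\<bar> * \<bar>kapply K f x\<bar> * \<bar>p x\<bar>" by (simp add: abs_mult)
      also have "\<dots> \<le> sc f * ((\<Sum>y\<in>UNIV. \<bar>K x y\<bar>) * sc f) * 1"
        by (intro mult_mono a b c) (auto intro!: sc_nonneg mult_nonneg_nonneg sum_nonneg)
      also have "\<dots> = (sc f)\<^sup>2 * (\<Sum>y\<in>UNIV. \<bar>K x y\<bar>)"
        by (simp add: power2_eq_square)
      finally show "\<bar>f x * kapply K f x * p x\<bar> \<le> (sc f)\<^sup>2 * (\<Sum>y\<in>UNIV. \<bar>K x y\<bar>)" .
    qed
    also have "\<dots> = (sc f)\<^sup>2 * (\<Sum>x\<in>UNIV. \<Sum>y\<in>UNIV. \<bar>K x y\<bar>)"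
      by (simp only: sum_distrib_left)
    also have "\<dots> = C * inner_pi p f f" unfolding sc_sq C_def by simp
    finally show ?thesis by (simp only: pos_divide_le_eq[OF ipos])
  qed
  note bnd = this
  show ?thesis
  proof (rule bdd_aboveI[where M=C])
    fix r assume "r \<in> ?S"
    then obtain f where "r = ?e f" "f \<noteq> (\<lambda>_. 0)" by blast
    then show "r \<le> C" using bnd by simp
  qed
qed

lemma bdd_op: "bdd_above {sqrt (inner_pi p (kapply K f) (kapply K f)) / sqrt (inner_pi p f f) | f. f \<in> l2_0 p \<and> f \<noteq> (\<lambda>_. 0)}"
  (is "bdd_above {?e f | f. _}" is "bdd_above ?S")
proof -
  define C where "C = (\<Sum>x\<in>UNIV. ((\<Sum>y\<in>UNIV. \<bar>K x y\<bar>))\<^sup>2) / Min (range p)"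
  have "sqrt (inner_pi p (kapply K f) (kapply K f)) / sqrt (inner_pi p f f) \<le> sqrt C" if "f \<noteq> (\<lambda>_. 0)" for f
  proof -
    have ipos: "inner_pi p f f > 0" using inner_self_pos pos that by blast
    have "inner_pi p (kapply K f) (kapply K f) \<le> (\<Sum>x\<in>UNIV. ((\<Sum>y\<in>UNIV. \<bar>K x y\<bar>) * sc f)\<^sup>2)"
      unfolding inner_pi_def
    proof (intro sum_mono)
      fix x
      have b: "\<bar>kapply K f x\<bar> \<le> (\<Sum>y\<in>UNIV. \<bar>K x y\<bar>) * sc f"
        by (rule kapply_bound) (use point_bound pos in \<open>auto simp: sc_def\<close>)
      have "kapply K f x * kapply K f x * p x \<le> (kapply K f x)\<^sup>2 * 1"
        using mult_left_mono[OF p_le1[of x], of "kapply K f x * kapply K f x"] by (simp add: power2_eq_square)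
      also have "\<dots> = \<bar>kapply K f x\<bar>\<^sup>2" by simp
      also have "\<dots> \<le> ((\<Sum>y\<in>UNIV. \<bar>K x y\<bar>) * sc f)\<^sup>2"
        by (rule power_mono[OF b]) simp
      finally show "kapply K f x * kapply K f x * p x \<le> ((\<Sum>y\<in>UNIV. \<bar>K x y\<bar>) * sc f)\<^sup>2" .
    qed
    also have "\<dots> = (\<Sum>x\<in>UNIV. ((\<Sum>y\<in>UNIV. \<bar>K x y\<bar>))\<^sup>2) * (inner_pi p f f / Min (range p))"
      unfolding power_mult_distrib sc_sq by (simp only: sum_distrib_right)
    also have "\<dots> = C * inner_pi p f f"
      unfolding C_def by simp
    finally have "inner_pi p (kapply K f) (kapply K f) \<le> C * inner_pi p f f" .
    then have "sqrt (inner_pi p (kapply K f) (kapply K f)) \<le> sqrt (C * inner_pi p f f)"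
      by (rule real_sqrt_le_mono)
    also have "\<dots> = sqrt C * sqrt (inner_pi p f f)" by (rule real_sqrt_mult)
    finally have le: "sqrt (inner_pi p (kapply K f) (kapply K f)) \<le> sqrt C * sqrt (inner_pi p f f)" .
    have sp: "sqrt (inner_pi p f f) > 0" using ipos by simp
    show ?thesis using le by (simp only: pos_divide_le_eq[OF sp])
  qed
  note bnd = this
  show ?thesis
  proof (rule bdd_aboveI[where M="sqrt C"])
    fix r assume "r \<in> ?S"
    then obtain f where "r = ?e f" "f \<noteq> (\<lambda>_. 0)" by blast
    then show "r \<le> sqrt C" using bnd by simp
  qed
qed

end



locale orb_setting = pmf_setting p for p :: "'x::finite \<Rightarrow> real" +
  fixes \<Gamma> :: "('g,'m) monoid_scheme" and \<phi> :: "'g \<Rightarrow> 'x \<Rightarrow> 'x"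
  assumes ga: "group_action \<Gamma> UNIV \<phi>"
begin

abbreviation "Orb x \<equiv> orbit \<Gamma> \<phi> x"
abbreviation "G \<equiv> gibbs_orbit \<Gamma> \<phi> p"
abbreviation "M \<equiv> mh_orbit \<Gamma> \<phi> p"

lemma O_refl: "x \<in> Orb x"
  by (rule group_action.orbit_refl[OF ga]) simp

lemma O_sym: "y \<in> Orb x \<Longrightarrow> x \<in> Orb y"
  using group_action.orbit_sym[OF ga, of x y] by simp

lemma O_eq: assumes "y \<in> Orb x" shows "Orb y = Orb x"
proof
  show "Orb y \<subseteq> Orb x"
  proof
    fix z assume "z \<in> Orb y"
    then show "z \<in> Orb x" using group_action.orbit_trans[OF ga, of x y z] assms by simp
  qed
  show "Orb x \<subseteq> Orb y"
  proof
    fix z assume "z \<in> Orb x"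
    then show "z \<in> Orb y" using group_action.orbit_trans[OF ga, of y x z] O_sym[OF assms] by simp
  qed
qed

lemma S_pos: "(\<Sum>z\<in>Orb x. p z) > 0"
proof -
  have nn: "\<And>z. 0 \<le> p z" using pos less_imp_le by blast
  have "p x \<le> (\<Sum>z\<in>Orb x. p z)" using O_refl nn by (intro member_le_sum) auto
  then show ?thesis using pos[of x] by linarith
qed

lemma G_off: "y \<notin> Orb x \<Longrightarrow> G x y = 0"
  unfolding gibbs_orbit_def by simp

lemma G_row: "(\<Sum>y\<in>UNIV. G x y) = 1"
proof -
  have "(\<Sum>y\<in>UNIV. G x y) = (\<Sum>y\<in>UNIV \<inter> Orb x. p y / (\<Sum>z\<in>Orb x. p z))"
    unfolding gibbs_orbit_def by (rule sum.inter_restrict[symmetric]) simp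
  also have "\<dots> = 1" using S_pos[of x] by (simp add: sum_divide_distrib[symmetric])
  finally show ?thesis .
qed

lemma G_rowfun: "y \<in> Orb x \<Longrightarrow> G y = G x"
proof -
  assume "y \<in> Orb x"
  then have e: "Orb y = Orb x" by (rule O_eq)
  show ?thesis unfolding gibbs_orbit_def e by simp
qed

lemma G_rev: "reversible p G"
  unfolding reversible_def
proof (intro allI)
  fix x y
  show "p x * G x y = p y * G y x"
  proof (cases "y \<in> Orb x")
    case True
    then have "x \<in> Orb y" "Orb y = Orb x" using O_sym[of y x] O_eq[of y x] by auto
    then show ?thesis using True unfolding gibbs_orbit_def by simp
  next
    case False
    then have "x \<notin> Orb y" using O_sym by blast
    then show ?thesis using False unfolding gibbs_orbit_def by simp
  qed
qed

lemma M_off: "y \<notin> Orb x \<Longrightarrow> M x y = 0"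
  unfolding mh_orbit_def mh_offdiag_def using O_refl by auto

lemma M_row: "(\<Sum>y\<in>UNIV. M x y) = 1"
proof -
  have "(\<Sum>y\<in>UNIV. M x y) = M x x + (\<Sum>y\<in>UNIV - {x}. M x y)"
    by (rule sum.remove) auto
  also have "(\<Sum>y\<in>UNIV - {x}. M x y) = (\<Sum>y\<in>UNIV - {x}. mh_offdiag \<Gamma> \<phi> p x y)"
    unfolding mh_orbit_def by (rule sum.cong) auto
  finally show ?thesis unfolding mh_orbit_def by simp
qed

lemma min_lemma: "p x * min 1 (p y / p x) = min (p x) (p y)"
proof (cases "p y \<le> p x")
  case True
  then have "p y / p x \<le> 1" using pos[of x] by simp
  then show ?thesis using True pos[of x] by (simp add: min_def)
next
  case False
  then have "\<not> p y / p x \<le> 1" using pos[of x] by simp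
  then show ?thesis using False pos[of x] by (simp add: min_def)
qed

lemma M_rev: "reversible p M"
  unfolding reversible_def
proof (intro allI)
  fix x y
  show "p x * M x y = p y * M y x"
  proof (cases "x = y")
    case True then show ?thesis by simp
  next
    case ne: False
    show ?thesis
    proof (cases "y \<in> Orb x")
      case True
      then have "x \<in> Orb y" "Orb y = Orb x" using O_sym[of y x] O_eq[of y x] by auto
      have a: "p x * M x y = min (p x) (p y) / (real (card (Orb x)) - 1)"
        using True ne unfolding mh_orbit_def mh_offdiag_def by (simp add: min_lemma)
      have b: "p y * M y x = min (p y) (p x) / (real (card (Orb y)) - 1)"
        using \<open>x \<in> Orb y\<close> ne unfolding mh_orbit_def mh_offdiag_def by (simp add: min_lemma)
      show ?thesis unfolding a b \<open>Orb y = Orb x\<close> by (simp add: min.commute)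
    next
      case False
      then have "x \<notin> Orb y" using O_sym by blast
      then show ?thesis using False ne unfolding mh_orbit_def mh_offdiag_def by auto
    qed
  qed
qed

lemma const_fix:
  assumes "\<And>y. y \<notin> Orb x \<Longrightarrow> K x y = 0" "(\<Sum>y\<in>UNIV. K x y) = 1"
    "\<And>y. y \<in> Orb x \<Longrightarrow> g y = g x"
  shows "kapply K g x = g x"
proof -
  have "kapply K g x = (\<Sum>y\<in>UNIV. K x y * g x)"
    unfolding kapply_def by (rule sum.cong) (use assms in auto)
  also have "\<dots> = g x" using assms(2) by (simp add: sum_distrib_right[symmetric])
  finally show ?thesis .
qed

lemma G_const: "y \<in> Orb x \<Longrightarrow> kapply G f y = kapply G f x"
  unfolding kapply_def using G_rowfun by simp

lemma MG: "kapply M (kapply G f) = kapply G f"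
  by (rule ext, rule const_fix) (auto simp: M_off M_row G_const)

lemma GG: "kapply G (kapply G f) = kapply G f"
  by (rule ext, rule const_fix) (auto simp: G_off G_row G_const)

lemma GM: "kapply G (kapply M f) = kapply G f"
proof (rule inner_ext[of p])
  show "\<And>x. p x > 0" by (rule pos)
  fix h
  have "inner_pi p h (kapply G (kapply M f)) = inner_pi p (kapply G h) (kapply M f)"
    by (rule selfadj[OF G_rev])
  also have "\<dots> = inner_pi p (kapply M (kapply G h)) f"
    by (rule selfadj[OF M_rev])
  also have "\<dots> = inner_pi p h (kapply G f)"
    unfolding MG by (rule selfadj[OF G_rev, symmetric])
  finally show "inner_pi p h (kapply G (kapply M f)) = inner_pi p h (kapply G f)" .
qed

lemma Mk_G: "(kapply M ^^ k) (kapply G f) = kapply G f"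
  by (induction k) (auto simp: MG)

lemma G_Mk: "kapply G ((kapply M ^^ k) f) = kapply G f"
  by (induction k) (auto simp: GM)

lemma M_l2: "f \<in> l2_0 p \<Longrightarrow> kapply M f \<in> l2_0 p"
  by (rule l2_0_pres[OF M_rev M_row])

lemma G_l2: "f \<in> l2_0 p \<Longrightarrow> kapply G f \<in> l2_0 p"
  by (rule l2_0_pres[OF G_rev G_row])

lemma Mk_l2: "f \<in> l2_0 p \<Longrightarrow> (kapply M ^^ k) f \<in> l2_0 p"
  by (induction k) (auto simp: M_l2)

lemma Mk_sa: "inner_pi p f ((kapply M ^^ k) g) = inner_pi p ((kapply M ^^ k) f) g"
proof (induction k arbitrary: f g)
  case 0 then show ?case by simp
next
  case (Suc k)
  have "inner_pi p f ((kapply M ^^ Suc k) g) = inner_pi p (kapply M f) ((kapply M ^^ k) g)"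
    using selfadj[OF M_rev, of f "(kapply M ^^ k) g"] by simp
  also have "\<dots> = inner_pi p ((kapply M ^^ k) (kapply M f)) g" by (rule Suc)
  also have "(kapply M ^^ k) (kapply M f) = (kapply M ^^ Suc k) f"
    by (simp add: funpow_swap1)
  finally show ?case .
qed

end


context pmf_setting
begin

lemma inner_nn: "inner_pi p f f \<ge> 0"
  by (rule inner_self_nonneg) (simp add: less_imp_le pos)

lemma inner_zero_fun: "inner_pi p f (\<lambda>_. 0) = 0" "inner_pi p (\<lambda>_. 0) f = 0"
  unfolding inner_pi_def by simp_all

lemma rho_nonneg: "rho p K \<ge> 0"
  unfolding rho_def using bdd_rho[of K] by (intro cSup_upper) auto

lemma rho_bound:
  assumes "f \<in> l2_0 p"
  shows "\<bar>inner_pi p f (kapply K f)\<bar> \<le> rho p K * inner_pi p f f"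
proof (cases "f = (\<lambda>_. 0)")
  case True then show ?thesis by (simp add: inner_zero_fun)
next
  case False
  have ipos: "inner_pi p f f > 0" using inner_self_pos pos False by blast
  have "\<bar>inner_pi p f (kapply K f)\<bar> / inner_pi p f f \<le> rho p K"
    unfolding rho_def using bdd_rho[of K] assms False by (intro cSup_upper) auto
  then show ?thesis by (simp only: pos_divide_le_eq[OF ipos])
qed

lemma rho_le:
  assumes "\<And>f. f \<in> l2_0 p \<Longrightarrow> f \<noteq> (\<lambda>_. 0) \<Longrightarrow> \<bar>inner_pi p f (kapply K f)\<bar> \<le> c * inner_pi p f f"
    and "c \<ge> 0"
  shows "rho p K \<le> c"
  unfolding rho_def
proof (rule cSup_least)
  fix r assume "r \<in> insert 0 {\<bar>inner_pi p f (kapply K f)\<bar> / inner_pi p f f | f. f \<in> l2_0 p \<and> f \<noteq> (\<lambda>_. 0)}"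
  then show "r \<le> c"
  proof
    assume "r = 0" then show ?thesis using assms(2) by simp
  next
    assume "r \<in> {\<bar>inner_pi p f (kapply K f)\<bar> / inner_pi p f f | f. f \<in> l2_0 p \<and> f \<noteq> (\<lambda>_. 0)}"
    then obtain f where f: "r = \<bar>inner_pi p f (kapply K f)\<bar> / inner_pi p f f" "f \<in> l2_0 p" "f \<noteq> (\<lambda>_. 0)"
      by blast
    have ipos: "inner_pi p f f > 0" using inner_self_pos pos f(3) by blast
    show ?thesis unfolding f(1) pos_divide_le_eq[OF ipos] using assms(1)[OF f(2,3)] .
  qed
qed simp

lemma opnorm_nonneg: "opnorm_l2_0 p K \<ge> 0"
  unfolding opnorm_l2_0_def using bdd_op[of K] by (intro cSup_upper) auto

lemma opnorm_bound:
  assumes "f \<in> l2_0 p"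
  shows "inner_pi p (kapply K f) (kapply K f) \<le> (opnorm_l2_0 p K)\<^sup>2 * inner_pi p f f"
proof (cases "f = (\<lambda>_. 0)")
  case True then show ?thesis by (simp add: inner_zero_fun kapply_zero)
next
  case False
  have ipos: "inner_pi p f f > 0" using inner_self_pos pos False by blast
  have sp: "sqrt (inner_pi p f f) > 0" using ipos by simp
  have "sqrt (inner_pi p (kapply K f) (kapply K f)) / sqrt (inner_pi p f f) \<le> opnorm_l2_0 p K"
    unfolding opnorm_l2_0_def using bdd_op[of K] assms False by (intro cSup_upper) auto
  then have le: "sqrt (inner_pi p (kapply K f) (kapply K f)) \<le> opnorm_l2_0 p K * sqrt (inner_pi p f f)"
    by (simp only: pos_divide_le_eq[OF sp])
  have nn: "0 \<le> sqrt (inner_pi p (kapply K f) (kapply K f))" by (simp add: inner_nn)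
  have "(sqrt (inner_pi p (kapply K f) (kapply K f)))\<^sup>2 \<le> (opnorm_l2_0 p K * sqrt (inner_pi p f f))\<^sup>2"
    by (rule power_mono[OF le nn])
  also have "\<dots> = (opnorm_l2_0 p K)\<^sup>2 * inner_pi p f f"
    using ipos by (simp add: power_mult_distrib)
  also have "(sqrt (inner_pi p (kapply K f) (kapply K f)))\<^sup>2 = inner_pi p (kapply K f) (kapply K f)"
    by (simp add: inner_nn)
  finally show ?thesis .
qed

end

locale main_setting = orb_setting p \<Gamma> \<phi> for p :: "'x::finite \<Rightarrow> real" and \<Gamma> :: "('g,'m) monoid_scheme" and \<phi> +
  fixes P :: "'x \<Rightarrow> 'x \<Rightarrow> real"
  assumes P_rev: "reversible p P" and P_row: "\<And>x. (\<Sum>y\<in>UNIV. P x y) = 1"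
begin

abbreviation "D \<equiv> (\<lambda>x y. M x y - G x y)"
abbreviation "th \<equiv> opnorm_l2_0 p D"
abbreviation "rP \<equiv> rho p P"

lemma P_l2: "f \<in> l2_0 p \<Longrightarrow> kapply P f \<in> l2_0 p"
  by (rule l2_0_pres[OF P_rev P_row])

lemma bil:
  assumes "a \<in> l2_0 p" "b \<in> l2_0 p"
  shows "\<bar>inner_pi p a (kapply P b)\<bar> \<le> rP * (inner_pi p a a + inner_pi p b b) / 2"
proof -
  let ?u = "\<lambda>x. a x + b x" and ?v = "\<lambda>x. a x - b x"
  have sym: "inner_pi p b (kapply P a) = inner_pi p a (kapply P b)"
    using selfadj[OF P_rev, of b a] inner_comm[of p "kapply P b" a] by simp
  have id1: "inner_pi p ?u (kapply P ?u) - inner_pi p ?v (kapply P ?v) = 4 * inner_pi p a (kapply P b)"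
    by (simp add: kapply_add kapply_diff inner_add_left inner_add_right inner_diff_left inner_diff_right sym)
  have id2: "inner_pi p ?u ?u + inner_pi p ?v ?v = 2 * (inner_pi p a a + inner_pi p b b)"
    by (simp add: inner_add_left inner_add_right inner_diff_left inner_diff_right inner_comm[of p b a])
  have u: "\<bar>inner_pi p ?u (kapply P ?u)\<bar> \<le> rP * inner_pi p ?u ?u"
    by (rule rho_bound) (rule l2_0_add[OF assms])
  have v: "\<bar>inner_pi p ?v (kapply P ?v)\<bar> \<le> rP * inner_pi p ?v ?v"
    by (rule rho_bound) (rule l2_0_diff[OF assms])
  have "4 * \<bar>inner_pi p a (kapply P b)\<bar> \<le> rP * inner_pi p ?u ?u + rP * inner_pi p ?v ?v"
    using id1 u v by linarith
  also have "\<dots> = rP * (inner_pi p ?u ?u + inner_pi p ?v ?v)"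
    by (simp only: distrib_left)
  also have "\<dots> = 2 * (rP * (inner_pi p a a + inner_pi p b b))"
    unfolding id2 by simp
  finally show ?thesis by simp
qed

lemma bil_scaled:
  assumes "a \<in> l2_0 p" "b \<in> l2_0 p" "inner_pi p a a \<le> F" "inner_pi p b b \<le> t\<^sup>2 * F" "t \<ge> 0"
  shows "\<bar>inner_pi p a (kapply P b)\<bar> \<le> rP * t * F"
proof (cases "t = 0")
  case True
  then have "inner_pi p b b \<le> 0" using assms(4) by simp
  then have "b = (\<lambda>_. 0)" using inner_self_zero pos by blast
  moreover have "F \<ge> 0" using assms(3) inner_nn[of a] by linarith
  ultimately show ?thesis using True by (simp add: kapply_zero inner_zero_fun)
next
  case False
  then have tpos: "t > 0" using assms(5) by simp
  define s where "s = sqrt t"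
  have spos: "s > 0" using tpos s_def by simp
  have ss: "s * s = t" using assms(5) s_def by simp
  define r where "r = 1 / s"
  have rs: "s * r = 1" using spos r_def by simp
  have rr: "r * r = 1 / t" using r_def ss by simp
  let ?a = "\<lambda>x. s * a x" and ?b = "\<lambda>x. r * b x"
  have "inner_pi p ?a (kapply P ?b) = s * (r * inner_pi p a (kapply P b))"
    by (simp add: kapply_scale inner_scale_left inner_scale_right)
  also have "\<dots> = inner_pi p a (kapply P b)" using rs by (simp add: mult.assoc[symmetric])
  finally have "inner_pi p ?a (kapply P ?b) = inner_pi p a (kapply P b)" .
  moreover have "\<bar>inner_pi p ?a (kapply P ?b)\<bar> \<le> rP * (inner_pi p ?a ?a + inner_pi p ?b ?b) / 2"
    by (rule bil) (use assms l2_0_scale in auto)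
  moreover have "inner_pi p ?a ?a = t * inner_pi p a a"
    by (simp add: inner_scale_left inner_scale_right ss[symmetric])
  moreover have "inner_pi p ?b ?b = inner_pi p b b / t"
    by (simp add: inner_scale_left inner_scale_right mult.assoc[symmetric] rr)
  moreover have "t * inner_pi p a a + inner_pi p b b / t \<le> 2 * t * F"
  proof -
    have "t * inner_pi p a a \<le> t * F" using assms(3) tpos by simp
    moreover have "inner_pi p b b / t \<le> t * F"
      using assms(4) tpos by (simp add: divide_le_eq power2_eq_square mult_ac)
    ultimately show ?thesis by simp
  qed
  moreover have "rP \<ge> 0" by (rule rho_nonneg)
  ultimately have "\<bar>inner_pi p a (kapply P b)\<bar> \<le> rP * (2 * t * F) / 2"
    by (smt (verit) mult_left_mono divide_right_mono)
  then show ?thesis by simp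
qed


definition ek :: "nat \<Rightarrow> ('x \<Rightarrow> real) \<Rightarrow> 'x \<Rightarrow> real" where
  "ek k f = (\<lambda>x. (kapply M ^^ k) f x - kapply G f x)"

lemma ek_l2: "f \<in> l2_0 p \<Longrightarrow> ek k f \<in> l2_0 p"
  unfolding ek_def by (rule l2_0_diff[OF Mk_l2 G_l2])

lemma ek_Suc: "ek (Suc k) f = kapply D (ek k f)"
  unfolding ek_def kapply_ksub kapply_diff MG G_Mk GG by (simp add: fun_eq_iff)

lemma pyth: "inner_pi p (ek 0 f) (ek 0 f) = inner_pi p f f - inner_pi p (kapply G f) (kapply G f)"
proof -
  have a: "inner_pi p (kapply G f) (kapply G f) = inner_pi p f (kapply G f)"
    using selfadj[OF G_rev, of f "kapply G f"] GG by simp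
  show ?thesis unfolding ek_def
    by (simp add: inner_diff_left inner_diff_right a inner_comm[of p "kapply G f" f])
qed

lemma G_contr: "inner_pi p (kapply G f) (kapply G f) \<le> inner_pi p f f"
  using pyth[of f] inner_nn[of "ek 0 f"] by linarith

lemma ek_bound: "f \<in> l2_0 p \<Longrightarrow> inner_pi p (ek k f) (ek k f) \<le> th ^ (2 * k) * inner_pi p f f"
proof (induction k)
  case 0
  then show ?case using pyth[of f] inner_nn[of "kapply G f"] by simp
next
  case (Suc k)
  have "inner_pi p (ek (Suc k) f) (ek (Suc k) f) \<le> th\<^sup>2 * inner_pi p (ek k f) (ek k f)"
    unfolding ek_Suc by (rule opnorm_bound) (rule ek_l2[OF Suc.prems])
  also have "\<dots> \<le> th\<^sup>2 * (th ^ (2 * k) * inner_pi p f f)"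
    by (rule mult_left_mono) (use Suc in auto)
  also have "\<dots> = th ^ (2 * Suc k) * inner_pi p f f"
    unfolding mult_Suc_right power_add by (simp add: mult.assoc)
  finally show ?case .
qed

lemma kernel_apply: "kapply (kmult (kpow M k) (kmult P (kpow M k))) f = (kapply M ^^ k) (kapply P ((kapply M ^^ k) f))"
  by (simp add: kapply_kmult kapply_kpow)

lemma kernel_applyG: "kapply (kmult G (kmult P G)) f = kapply G (kapply P (kapply G f))"
  by (simp add: kapply_kmult)

lemma quad_Mk: "inner_pi p f (kapply (kmult (kpow M k) (kmult P (kpow M k))) f)
   = inner_pi p ((kapply M ^^ k) f) (kapply P ((kapply M ^^ k) f))"
  unfolding kernel_apply by (rule Mk_sa)

lemma quad_G: "inner_pi p f (kapply (kmult G (kmult P G)) f)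
   = inner_pi p (kapply G f) (kapply P (kapply G f))"
  unfolding kernel_applyG by (rule selfadj[OF G_rev])

lemma lower: "rho p (kmult G (kmult P G)) \<le> rho p (kmult (kpow M k) (kmult P (kpow M k)))"
proof (rule rho_le)
  let ?c = "rho p (kmult (kpow M k) (kmult P (kpow M k)))"
  show "?c \<ge> 0" by (rule rho_nonneg)
  fix f assume f: "f \<in> l2_0 p" "f \<noteq> (\<lambda>_. 0)"
  define g where "g = kapply G f"
  have g: "g \<in> l2_0 p" unfolding g_def by (rule G_l2[OF f(1)])
  have "\<bar>inner_pi p f (kapply (kmult G (kmult P G)) f)\<bar> = \<bar>inner_pi p g (kapply P g)\<bar>"
    unfolding quad_G g_def ..
  also have "inner_pi p g (kapply P g) = inner_pi p g (kapply (kmult (kpow M k) (kmult P (kpow M k))) g)"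
    unfolding quad_Mk g_def Mk_G ..
  also have "\<bar>\<dots>\<bar> \<le> ?c * inner_pi p g g" by (rule rho_bound[OF g])
  also have "\<dots> \<le> ?c * inner_pi p f f"
    unfolding g_def by (rule mult_left_mono[OF G_contr rho_nonneg])
  finally show "\<bar>inner_pi p f (kapply (kmult G (kmult P G)) f)\<bar> \<le> ?c * inner_pi p f f" .
qed

lemma upper: "rho p (kmult (kpow M k) (kmult P (kpow M k)))
   \<le> rho p (kmult G (kmult P G)) + rP * (2 * th ^ k + th ^ (2 * k))"
proof (rule rho_le)
  have "th \<ge> 0" by (rule opnorm_nonneg)
  then show "0 \<le> rho p (kmult G (kmult P G)) + rP * (2 * th ^ k + th ^ (2 * k))"
    using rho_nonneg[of "kmult G (kmult P G)"] rho_nonneg[of P] by simp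
  fix f assume f: "f \<in> l2_0 p" "f \<noteq> (\<lambda>_. 0)"
  define a where "a = kapply G f"
  define b where "b = ek k f"
  define F where "F = inner_pi p f f"
  have al: "a \<in> l2_0 p" unfolding a_def by (rule G_l2[OF f(1)])
  have bl: "b \<in> l2_0 p" unfolding b_def by (rule ek_l2[OF f(1)])
  have aa: "inner_pi p a a \<le> F" unfolding a_def F_def by (rule G_contr)
  have bb: "inner_pi p b b \<le> (th ^ k)\<^sup>2 * F" unfolding b_def F_def
    using ek_bound[OF f(1), of k] by (simp add: power_mult[symmetric] mult.commute)
  have bb2: "inner_pi p b b \<le> th ^ (2 * k) * F" unfolding b_def F_def by (rule ek_bound[OF f(1)])
  have h: "(kapply M ^^ k) f = (\<lambda>x. a x + b x)" unfolding a_def b_def ek_def by simp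
  have sym: "inner_pi p b (kapply P a) = inner_pi p a (kapply P b)"
    using selfadj[OF P_rev, of b a] inner_comm[of p "kapply P b" a] by simp
  have exp: "inner_pi p f (kapply (kmult (kpow M k) (kmult P (kpow M k))) f)
     = inner_pi p a (kapply P a) + 2 * inner_pi p a (kapply P b) + inner_pi p b (kapply P b)"
    unfolding quad_Mk h by (simp add: kapply_add inner_add_left inner_add_right sym)
  have t1: "\<bar>inner_pi p a (kapply P a)\<bar> \<le> rho p (kmult G (kmult P G)) * F"
    unfolding a_def F_def quad_G[symmetric] by (rule rho_bound[OF f(1)])
  have t2: "\<bar>inner_pi p a (kapply P b)\<bar> \<le> rP * th ^ k * F"
    by (rule bil_scaled[OF al bl aa bb]) (simp add: opnorm_nonneg)
  have t3: "\<bar>inner_pi p b (kapply P b)\<bar> \<le> rP * (th ^ (2 * k) * F)"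
  proof -
    have "\<bar>inner_pi p b (kapply P b)\<bar> \<le> rP * inner_pi p b b" by (rule rho_bound[OF bl])
    also have "\<dots> \<le> rP * (th ^ (2 * k) * F)" by (rule mult_left_mono[OF bb2 rho_nonneg])
    finally show ?thesis .
  qed
  have "\<bar>inner_pi p f (kapply (kmult (kpow M k) (kmult P (kpow M k))) f)\<bar>
     \<le> rho p (kmult G (kmult P G)) * F + 2 * (rP * th ^ k * F) + rP * (th ^ (2 * k) * F)"
    unfolding exp using t1 t2 t3 by linarith
  also have "\<dots> = (rho p (kmult G (kmult P G)) + rP * (2 * th ^ k + th ^ (2 * k))) * F"
    by (simp add: algebra_simps)
  finally show "\<bar>inner_pi p f (kapply (kmult (kpow M k) (kmult P (kpow M k))) f)\<bar>
     \<le> (rho p (kmult G (kmult P G)) + rP * (2 * th ^ k + th ^ (2 * k))) * inner_pi p f f"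
    unfolding F_def .
qed

end



lemma main_bounds:
  fixes \<pi> :: "'x::finite \<Rightarrow> real" and P :: "'x \<Rightarrow> 'x \<Rightarrow> real"
    and \<Gamma> :: "('g, 'm) monoid_scheme" and \<phi> :: "'g \<Rightarrow> 'x \<Rightarrow> 'x"
  assumes "\<And>x. \<pi> x > 0" "(\<Sum>x\<in>UNIV. \<pi> x) = 1" "group_action \<Gamma> UNIV \<phi>"
    "reversible \<pi> P" "\<And>x. (\<Sum>y\<in>UNIV. P x y) = 1"
  shows "0 \<le> rho \<pi> (kmult (kpow (mh_orbit \<Gamma> \<phi> \<pi>) k) (kmult P (kpow (mh_orbit \<Gamma> \<phi> \<pi>) k)))
            - rho \<pi> (kmult (gibbs_orbit \<Gamma> \<phi> \<pi>) (kmult P (gibbs_orbit \<Gamma> \<phi> \<pi>)))"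
    and "rho \<pi> (kmult (kpow (mh_orbit \<Gamma> \<phi> \<pi>) k) (kmult P (kpow (mh_orbit \<Gamma> \<phi> \<pi>) k)))
            - rho \<pi> (kmult (gibbs_orbit \<Gamma> \<phi> \<pi>) (kmult P (gibbs_orbit \<Gamma> \<phi> \<pi>)))
         \<le> rho \<pi> P * (2 * opnorm_l2_0 \<pi> (\<lambda>x y. mh_orbit \<Gamma> \<phi> \<pi> x y - gibbs_orbit \<Gamma> \<phi> \<pi> x y) ^ k
              + opnorm_l2_0 \<pi> (\<lambda>x y. mh_orbit \<Gamma> \<phi> \<pi> x y - gibbs_orbit \<Gamma> \<phi> \<pi> x y) ^ (2 * k))"
    and "0 \<le> opnorm_l2_0 \<pi> (\<lambda>x y. mh_orbit \<Gamma> \<phi> \<pi> x y - gibbs_orbit \<Gamma> \<phi> \<pi> x y)"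
    and "0 \<le> rho \<pi> P"
proof -
  have ms: "main_setting \<pi> \<Gamma> \<phi> P"
    unfolding main_setting_def orb_setting_def pmf_setting_def orb_setting_axioms_def
      main_setting_axioms_def using assms by auto
  interpret main_setting \<pi> \<Gamma> \<phi> P by (rule ms)
  show "0 \<le> rho \<pi> (kmult (kpow (mh_orbit \<Gamma> \<phi> \<pi>) k) (kmult P (kpow (mh_orbit \<Gamma> \<phi> \<pi>) k)))
            - rho \<pi> (kmult (gibbs_orbit \<Gamma> \<phi> \<pi>) (kmult P (gibbs_orbit \<Gamma> \<phi> \<pi>)))"
    using lower[of k] by simp
  show "rho \<pi> (kmult (kpow (mh_orbit \<Gamma> \<phi> \<pi>) k) (kmult P (kpow (mh_orbit \<Gamma> \<phi> \<pi>) k)))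
            - rho \<pi> (kmult (gibbs_orbit \<Gamma> \<phi> \<pi>) (kmult P (gibbs_orbit \<Gamma> \<phi> \<pi>)))
         \<le> rho \<pi> P * (2 * opnorm_l2_0 \<pi> (\<lambda>x y. mh_orbit \<Gamma> \<phi> \<pi> x y - gibbs_orbit \<Gamma> \<phi> \<pi> x y) ^ k
              + opnorm_l2_0 \<pi> (\<lambda>x y. mh_orbit \<Gamma> \<phi> \<pi> x y - gibbs_orbit \<Gamma> \<phi> \<pi> x y) ^ (2 * k))"
    using upper[of k] by simp
  show "0 \<le> opnorm_l2_0 \<pi> (\<lambda>x y. mh_orbit \<Gamma> \<phi> \<pi> x y - gibbs_orbit \<Gamma> \<phi> \<pi> x y)"
    by (rule opnorm_nonneg)
  show "0 \<le> rho \<pi> P" by (rule rho_nonneg)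
qed

theorem proposition3p7:
  fixes \<pi> :: "'x::finite \<Rightarrow> real" and P :: "'x \<Rightarrow> 'x \<Rightarrow> real"
    and \<Gamma> :: "('g, 'm) monoid_scheme" and \<phi> :: "'g \<Rightarrow> 'x \<Rightarrow> 'x"
  assumes "pmf_full_support \<pi>"
    and "stochastic P" and "reversible \<pi> P" and "ergodic P"
    and "group_action \<Gamma> UNIV \<phi>"
  defines "G \<equiv> gibbs_orbit \<Gamma> \<phi> \<pi>"
    and "M \<equiv> mh_orbit \<Gamma> \<phi> \<pi>"
  defines "\<theta> \<equiv> opnorm_l2_0 \<pi> (\<lambda>x y. M x y - G x y)"
  shows "(\<forall>k::nat. k \<ge> 1 \<longrightarrow>
            0 \<le> rho \<pi> (kmult (kpow M k) (kmult P (kpow M k))) - rho \<pi> (kmult G (kmult P G)) \<and>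
            rho \<pi> (kmult (kpow M k) (kmult P (kpow M k))) - rho \<pi> (kmult G (kmult P G))
              \<le> rho \<pi> P * (2 * \<theta> ^ k + \<theta> ^ (2 * k)))
       \<and> (\<theta> < 1 \<longrightarrow>
            (\<lambda>k. rho \<pi> (kmult (kpow M k) (kmult P (kpow M k))) - rho \<pi> (kmult G (kmult P G)))
              \<longlonglongrightarrow> 0)"
proof -
  have pos: "\<And>x. \<pi> x > 0" and s1: "(\<Sum>x\<in>UNIV. \<pi> x) = 1"
    using assms(1) unfolding pmf_full_support_def by auto
  have row: "\<And>x. (\<Sum>y\<in>UNIV. P x y) = 1" using assms(2) unfolding stochastic_def by auto
  note B = main_bounds[OF pos s1 assms(5) assms(3) row]
  define d where "d k = rho \<pi> (kmult (kpow M k) (kmult P (kpow M k))) - rho \<pi> (kmult G (kmult P G))" for k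
  have lo: "0 \<le> d k" for k unfolding d_def M_def G_def by (rule B(1))
  have hi: "d k \<le> rho \<pi> P * (2 * \<theta> ^ k + \<theta> ^ (2 * k))" for k
    unfolding d_def \<theta>_def M_def G_def by (rule B(2))
  have th0: "0 \<le> \<theta>" unfolding \<theta>_def M_def G_def by (rule B(3))
  have lim: "d \<longlonglongrightarrow> 0" if th1: "\<theta> < 1"
  proof -
    have a: "(\<lambda>k. \<theta> ^ k) \<longlonglongrightarrow> 0" by (rule LIMSEQ_realpow_zero[OF th0 th1])
    have th2: "\<theta>\<^sup>2 < 1" using th0 th1 by (simp add: power_less_one_iff)
    have b: "(\<lambda>k. (\<theta>\<^sup>2) ^ k) \<longlonglongrightarrow> 0" by (rule LIMSEQ_realpow_zero[OF _ th2]) simp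
    have b': "(\<lambda>k. \<theta> ^ (2 * k)) \<longlonglongrightarrow> 0" using b by (simp add: power_mult)
    have u: "(\<lambda>k. rho \<pi> P * (2 * \<theta> ^ k + \<theta> ^ (2 * k))) \<longlonglongrightarrow> rho \<pi> P * (2 * 0 + 0)"
      by (intro tendsto_intros a b')
    show ?thesis
      by (rule tendsto_sandwich[OF _ _ tendsto_const u[simplified]]) (use lo hi in auto)
  qed
  show ?thesis using lo hi lim unfolding d_def by auto
qed

end
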